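(* Let $q$ be a prime power, let $k < q$ and $t \geq 1$ be integers, and let $C(X) \in \mathbb{F}_q[X]$ be a nonzero polynomial of the form $$C(X) = \sum_{i=0}^{t-1} C_i(X)\Lambda^i(X),$$ where $\Lambda(X) = X^q - X$ and $\deg(C_i) \leq k$ for all $i$. Let $H(X) \in \mathbb{F}_q[X]$ be irreducible, and let $\mu$ be the largest integer such that $H(X)^\mu$ divides $C(X)$. Then $\mu \bmod q \in [0, k+t-1]$. *)

theory Defs
  imports "HOL-Library.Cardinality" "HOL-Computational_Algebra.Polynomial" "HOL-Computational_Algebra.Polynomial_Factorial"
begin

definition Lambda_poly :: "'a::{field,finite} poly" where
  "Lambda_poly = (monom 1 (CARD('a)) - [:0, 1:] :: 'a poly)"

end

theory Submission
  imports Defs "HOL-Computational_Algebra.Computational_Algebra"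
begin

definition TT :: "'a::comm_ring_1 poly \<Rightarrow> 'a poly poly" where
  "TT f = pcompose (map_poly (\<lambda>c. [:c:]) f) [:[:0,1:], 1:]"

definition hasse :: "nat \<Rightarrow> 'a::comm_ring_1 poly \<Rightarrow> 'a poly" where
  "hasse a f = coeff (TT f) a"

lemma TT_0[simp]: "TT 0 = 0" by (simp add: TT_def)

lemma TT_pCons: "TT (pCons c f) = [:[:c:]:] + [:[:0,1:], 1:] * TT f"
  by (simp add: TT_def map_poly_pCons pcompose_pCons)

lemma TT_const[simp]: "TT [:c:] = [:[:c:]:]"
  using TT_pCons[of c 0] by simp

lemma TT_add: "TT (f + g) = TT f + TT g"
proof -
  have "map_poly (\<lambda>c. [:c:]) (f + g) = map_poly (\<lambda>c. [:c:]) f + map_poly (\<lambda>c. [:c:]) g"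
    by (intro poly_eqI) (simp add: coeff_map_poly)
  then show ?thesis by (simp add: TT_def pcompose_add)
qed

lemma TT_smult: "TT (smult c g) = [:[:c:]:] * TT g"
proof (induction g)
  case (pCons a g)
  show ?case using pCons by (simp add: TT_pCons algebra_simps)
qed simp

lemma TT_mult: "TT (f * g) = TT f * TT g"
proof (induction f)
  case (pCons c f)
  have "TT (pCons c f * g) = TT (smult c g + pCons 0 (f * g))" by simp
  also have "\<dots> = [:[:c:]:] * TT g + [:[:0,1:], 1:] * (TT f * TT g)"
    using pCons by (simp add: TT_add TT_smult TT_pCons del: pCons_0_0)
  also have "\<dots> = TT (pCons c f) * TT g" by (simp add: TT_pCons algebra_simps)
  finally show ?case .
qed simp

lemma TT_sum: "TT (sum f A) = (\<Sum>x\<in>A. TT (f x))"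
  by (induction A rule: infinite_finite_induct) (auto simp: TT_add)

lemma TT_pow: "TT (f ^ n) = TT f ^ n"
  by (induction n) (auto simp: TT_mult one_pCons)

lemma TT_X: "TT [:0,1:] = [:[:0,1:], 1:]"
  by (simp add: TT_pCons)

lemma hasse_0: "hasse 0 f = f"
  unfolding hasse_def by (induction f) (auto simp: TT_pCons)

lemma hasse_1: "hasse 1 f = pderiv f"
proof (induction f)
  case (pCons a f)
  have "hasse 1 (pCons a f) = [:0,1:] * hasse 1 f + hasse 0 f"
    by (simp add: hasse_def TT_pCons coeff_pCons)
  also have "\<dots> = pderiv (pCons a f)" using pCons by (simp add: hasse_0 pderiv_pCons)
  finally show ?case .
qed (simp add: hasse_def)

lemma hasse_add: "hasse a (f + g) = hasse a f + hasse a g"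
  by (simp add: hasse_def TT_add)

lemma hasse_sum: "hasse a (sum f A) = (\<Sum>x\<in>A. hasse a (f x))"
  by (simp add: hasse_def TT_sum coeff_sum)

lemma hasse_mult: "hasse a (f * g) = (\<Sum>b\<le>a. hasse b f * hasse (a - b) g)"
  by (simp add: hasse_def TT_mult coeff_mult)


lemma TT_minus: "TT (f - g) = TT f - TT g"
  using TT_add[of "f - g" g] by (simp add: algebra_simps)

lemma hasse_minus: "hasse a (f - g) = hasse a f - hasse a g"
  by (simp add: hasse_def TT_minus)

lemma dream_gen:
  fixes x y :: "'b::comm_semiring_1"
  assumes "\<And>k. 0 < k \<Longrightarrow> k < n \<Longrightarrow> of_nat (n choose k) = (0::'b)" and "n > 0"
  shows "(x + y) ^ n = x ^ n + y ^ n"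
proof -
  have "(x + y) ^ n = (\<Sum>k\<le>n. of_nat (n choose k) * x ^ k * y ^ (n - k))"
    by (rule binomial_ring)
  also have "\<dots> = (\<Sum>k\<in>{0,n}. of_nat (n choose k) * x ^ k * y ^ (n - k))"
  proof (intro sum.mono_neutral_right ballI)
    fix k assume "k \<in> {..n} - {0, n}"
    hence k: "k > 0" "k < n" by auto
    thus "of_nat (n choose k) * x ^ k * y ^ (n - k) = 0" using assms by simp
  qed auto
  finally show ?thesis using \<open>n > 0\<close> by (simp add: add_ac)
qed

lemma dream_gen_sum:
  fixes f :: "'c \<Rightarrow> 'b::comm_semiring_1"
  assumes "\<And>k. 0 < k \<Longrightarrow> k < n \<Longrightarrow> of_nat (n choose k) = (0::'b)" and "n > 0"
  shows "sum f A ^ n = (\<Sum>i\<in>A. f i ^ n)"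
  using assms
  by (induction A rule: infinite_finite_induct) (auto simp: power_0_left dream_gen)

lemma card_ge2: "CARD('a::{field,finite}) \<ge> 2"
proof -
  have "{0::'a, 1} \<subseteq> UNIV" by simp
  hence "card {0::'a, 1} \<le> CARD('a)" by (intro card_mono) auto
  thus ?thesis by simp
qed

lemma pow_card: "(x::'a::{field,finite}) ^ CARD('a) = x"
proof (cases "x = 0")
  case False
  have "x * (\<Prod>y\<in>UNIV-{0}. x * y) = x * x ^ (card (UNIV :: 'a set) - 1) * \<Prod>(UNIV-{0})"
    by (simp add: prod.distrib mult_ac)
  also have "x * x ^ (card (UNIV :: 'a set) - 1) = x ^ Suc (card (UNIV :: 'a set) - 1)"
    by (subst power_Suc) auto
  also have "Suc (card (UNIV :: 'a set) - 1) = card (UNIV :: 'a set)"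
    using finite_UNIV_card_ge_0[where ?'a = 'a] by simp
  also have "(\<Prod>y\<in>UNIV-{0}. x * y) = (\<Prod>y\<in>UNIV-{0}. y)"
    by (rule prod.reindex_bij_witness[of _ "\<lambda>y. y / x" "\<lambda>y. x * y"]) (use False in auto)
  finally show ?thesis
    by simp
qed (use finite_UNIV_card_ge_0[where ?'a = 'a] in auto)

lemma choose_card:
  assumes "0 < b" "b < CARD('a::{field,finite})"
  shows "of_nat (CARD('a) choose b) = (0::'a)"
proof -
  let ?q = "CARD('a)"
  have eq: "[:1,1:] ^ ?q = monom (1::'a) ?q + 1"
  proof (rule poly_eqI_degree_lead_coeff[where n = ?q and A = UNIV])
    show "coeff ([:1,1:] ^ ?q) ?q = coeff (monom (1::'a) ?q + 1) ?q"
      using card_ge2[where 'a='a] by (simp add: coeff_linear_power)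
    show "degree ([:1::'a,1:] ^ ?q) \<le> ?q"
      by (metis degree_linear_power order.refl)
    show "degree (monom (1::'a) ?q + 1) \<le> ?q"
      by (metis degree_1 degree_add_le degree_monom_le le_zero_eq nat_le_linear)
    fix z :: 'a
    show "poly ([:1,1:] ^ ?q) z = poly (monom 1 ?q + 1) z"
      by (simp add: poly_monom pow_card add.commute)
  qed simp
  have c1: "coeff ([:1,1:] ^ ?q) b = of_nat (?q choose b)"
    using assms by (simp add: coeff_linear_poly_power)
  have c2: "coeff (monom (1::'a) ?q + 1) b = 0"
    using assms by simp
  show ?thesis using eq c1 c2 by metis
qed

lemma choose_card_poly:
  assumes "0 < b" "b < CARD('a::{field,finite})"
  shows "of_nat (CARD('a) choose b) = (0::'a poly)" "of_nat (CARD('a) choose b) = (0::'a poly poly)"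
  using choose_card[OF assms] by (simp_all add: of_nat_poly)

definition W :: "nat \<Rightarrow> 'a::{field,finite} poly \<Rightarrow> bool" where
  "W w f \<longleftrightarrow> (\<forall>b. w < b \<and> b < CARD('a) \<longrightarrow> hasse b f = 0)"

lemma W_mult: assumes "W w1 f" "W w2 g" shows "W (w1 + w2) (f * g)"
  unfolding W_def
proof (intro allI impI)
  fix a assume a: "w1 + w2 < a \<and> a < CARD('a)"
  have "hasse a (f * g) = (\<Sum>b\<le>a. hasse b f * hasse (a - b) g)" by (rule hasse_mult)
  also have "\<dots> = 0"
  proof (intro sum.neutral ballI)
    fix b assume "b \<in> {..a}"
    then show "hasse b f * hasse (a - b) g = 0"
    proof (cases "w1 < b")
      case True
      then show ?thesis using assms a \<open>b \<in> {..a}\<close> unfolding W_def by auto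
    next
      case False
      then have "w2 < a - b" "a - b < CARD('a)" using a by auto
      then show ?thesis using assms unfolding W_def by auto
    qed
  qed
  finally show "hasse a (f * g) = 0" .
qed

lemma W_add: "W w f \<Longrightarrow> W w g \<Longrightarrow> W w (f + g)"
  by (simp add: W_def hasse_add)

lemma W_minus: "W w f \<Longrightarrow> W w g \<Longrightarrow> W w (f - g)"
  by (simp add: W_def hasse_minus)

lemma W_zero: "W w 0"
  by (simp add: W_def hasse_def)

lemma W_sum: "(\<And>i. i \<in> A \<Longrightarrow> W w (f i)) \<Longrightarrow> W w (sum f A)"
  by (induction A rule: infinite_finite_induct) (auto simp: W_zero W_add)

lemma W_mono: "W w f \<Longrightarrow> w \<le> w' \<Longrightarrow> W w' f"
  by (simp add: W_def)

lemma W_const: "W w [:c:]"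
  by (auto simp add: W_def hasse_def coeff_pCons split: nat.splits)

lemma W_one: "W w 1"
  using W_const[of w 1] by (simp add: one_pCons)

lemma W_pow: "W w f \<Longrightarrow> W (n * w) (f ^ n)"
  by (induction n) (auto simp: W_one intro: W_mult)

lemma W_pow0: "W 0 f \<Longrightarrow> W 0 (f ^ n)"
  using W_pow[of 0 f n] by simp

lemma W_X: "W 1 ([:0,1:] :: 'a::{field,finite} poly)"
  by (simp add: W_def hasse_def TT_X coeff_pCons split: nat.splits)

lemma W_Xq: "W 0 ([:0,1:] ^ CARD('a) :: 'a::{field,finite} poly)"
proof -
  let ?q = "CARD('a)"
  have q: "?q > 0" using card_ge2[where 'a='a] by simp
  have "TT ([:0,1:] ^ ?q :: 'a poly) = ([:[:0,1:]:] + [:0,1:]) ^ ?q"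
    by (simp add: TT_pow TT_X)
  also have "\<dots> = [:[:0,1:]:] ^ ?q + [:0,1:] ^ ?q"
    by (rule dream_gen) (auto intro: choose_card_poly(2)[where 'a='a] simp: q)
  also have "\<dots> = [:[:0,1:] ^ ?q:] + monom 1 ?q"
    by (simp add: poly_const_pow monom_altdef)
  finally show ?thesis by (auto simp: W_def hasse_def coeff_pCons split: nat.splits)
qed


lemma W_Lambda: "W 1 (Lambda_poly :: 'a::{field,finite} poly)"
proof -
  have "Lambda_poly = ([:0,1:] ^ CARD('a) - [:0,1:] :: 'a poly)"
    by (simp add: Lambda_poly_def monom_altdef)
  thus ?thesis using W_minus[OF W_mono[OF W_Xq[where 'a='a]] W_X] by simp
qed

lemma monom_as: "monom c i = [:c:] * [:0,1:] ^ i"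
  by (simp add: monom_altdef)

lemma W_deg: assumes "degree (f :: 'a::{field,finite} poly) \<le> k" shows "W k f"
proof -
  have "W k (\<Sum>i\<le>degree f. monom (coeff f i) i)"
  proof (rule W_sum)
    fix i assume "i \<in> {..degree f}"
    hence "i \<le> k" using assms by auto
    have "W (0 + i * 1) ([:coeff f i:] * [:0,1:] ^ i)"
      by (intro W_mult W_const W_pow W_X)
    thus "W k (monom (coeff f i) i)" using \<open>i \<le> k\<close> by (auto simp: monom_as intro: W_mono)
  qed
  thus ?thesis by (simp add: poly_as_sum_of_monoms)
qed

lemma W_powq: "W 0 ((f :: 'a::{field,finite} poly) ^ CARD('a))"
proof -
  have q: "CARD('a) > 0" using card_ge2[where 'a='a] by simp
  have "f ^ CARD('a) = (\<Sum>i\<le>degree f. monom (coeff f i) i) ^ CARD('a)"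
    by (simp add: poly_as_sum_of_monoms)
  also have "\<dots> = (\<Sum>i\<le>degree f. monom (coeff f i) i ^ CARD('a))"
    by (rule dream_gen_sum) (simp_all add: choose_card_poly q)
  also have "\<dots> = (\<Sum>i\<le>degree f. [:coeff f i:] ^ CARD('a) * ([:0,1:] ^ CARD('a)) ^ i)"
    by (intro sum.cong refl) (simp add: monom_altdef smult_power poly_const_pow mult.commute flip: power_mult)
  finally have eq: "f ^ CARD('a) = (\<Sum>i\<le>degree f. [:coeff f i:] ^ CARD('a) * ([:0,1:] ^ CARD('a)) ^ i)" .
  show ?thesis unfolding eq
  proof (rule W_sum)
    fix i
    have "W (0 + 0) ([:coeff f i:] ^ CARD('a) * ([:0,1:] ^ CARD('a)) ^ i)"
      by (intro W_mult W_pow0 W_const W_Xq)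
    thus "W 0 ([:coeff f i:] ^ CARD('a) * ([:0,1:] ^ CARD('a)) ^ i)" by simp
  qed
qed


lemma sep:
  fixes H :: "'a::{field,finite} poly"
  assumes irr: "irreducible H"
  shows "pderiv H \<noteq> 0"
proof
  assume pd: "pderiv H = 0"
  define p where "p = CHAR('a)"
  have pp: "prime p" unfolding p_def
    by (intro prime_CHAR_semidom finite_imp_CHAR_pos) simp
  have p2: "p \<ge> 2" using pp prime_ge_2_nat by blast
  have dv: "p dvd j" if "coeff H j \<noteq> 0" for j
  proof (cases j)
    case (Suc n)
    have "of_nat (Suc n) * coeff H (Suc n) = 0" using pd coeff_pderiv[of H n] by simp
    hence "of_nat (Suc n) = (0::'a)" using that Suc by simp
    thus ?thesis using Suc p_def of_nat_eq_0_iff_char_dvd by blast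
  qed simp
  have inj: "inj (\<lambda>x::'a. x ^ p)"
  proof (rule injI)
    fix x y :: 'a assume "x ^ p = y ^ p"
    have "(x - y + y) ^ p = (x - y) ^ p + y ^ p"
      using pp by (intro freshmans_dream) (simp_all add: p_def)
    hence "(x - y) ^ p = 0" using \<open>x ^ p = y ^ p\<close> by simp
    thus "x = y" by simp
  qed
  hence surj: "surj (\<lambda>x::'a. x ^ p)" by (intro finite_UNIV_inj_surj) simp_all
  define rt where "rt = inv (\<lambda>x::'a. x ^ p)"
  have rt: "rt c ^ p = c" for c
    unfolding rt_def using surj_f_inv_f[OF surj] by metis
  define G where "G = (\<Sum>j\<le>degree H. monom (rt (coeff H j)) (j div p))"
  have "G ^ p = (\<Sum>j\<le>degree H. monom (rt (coeff H j)) (j div p) ^ p)"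
    unfolding G_def using pp by (intro freshmans_dream_sum) (simp_all add: p_def)
  also have "\<dots> = (\<Sum>j\<le>degree H. monom (coeff H j) j)"
  proof (intro sum.cong refl)
    fix j
    show "monom (rt (coeff H j)) (j div p) ^ p = monom (coeff H j) j"
    proof (cases "coeff H j = 0")
      case True
      then show ?thesis by (simp add: monom_power rt)
    next
      case False
      then have "j div p * p = j" using dv by simp
      then show ?thesis by (simp add: monom_power rt)
    qed
  qed
  also have "\<dots> = H" by (rule poly_as_sum_of_monoms)
  finally have HG: "H = G * G ^ (p - 1)"
    using p2 by (metis Suc_diff_1 not_numeral_le_zero not_gr0 power_Suc)
  from irreducibleD[OF irr HG] show False
  proof
    assume "G dvd 1"
    hence "H dvd 1" using HG by (simp add: is_unit_power_iff is_unit_mult_iff)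
    thus False using irr irreducible_not_unit by blast
  next
    assume "G ^ (p - 1) dvd 1"
    hence "G dvd 1" using p2 by (simp add: is_unit_power_iff)
    hence "H dvd 1" using HG by (simp add: is_unit_power_iff is_unit_mult_iff)
    thus False using irr irreducible_not_unit by blast
  qed
qed


lemma hasse_pow_mod:
  fixes H :: "'a::idom poly"
  shows "(\<forall>b<n. H dvd hasse b (H ^ n * G)) \<and> H dvd (hasse n (H ^ n * G) - pderiv H ^ n * G)"
proof (induction n arbitrary: G)
  case 0
  show ?case by (simp add: hasse_0)
next
  case (Suc n)
  define F where "F = H ^ n * G"
  have eqF: "H ^ Suc n * G = H * F" by (simp add: F_def mult.assoc)
  have IH1: "H dvd hasse b F" if "b < n" for b using Suc.IH that unfolding F_def by blast
  have IH2: "H dvd (hasse n F - pderiv H ^ n * G)" using Suc.IH unfolding F_def by blast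
  have trm: "H dvd hasse c H * hasse (b - c) F" if "c \<le> b" "c \<noteq> 1" "b \<le> Suc n" for b c
  proof (cases "c = 0")
    case True
    then show ?thesis by (simp add: hasse_0)
  next
    case False
    then have "b - c < n" using that by arith
    then show ?thesis using IH1 by (simp add: dvd_mult)
  qed
  have A: "H dvd hasse b (H ^ Suc n * G)" if "b < Suc n" for b
  proof -
    have "hasse b (H ^ Suc n * G) = (\<Sum>c\<le>b. hasse c H * hasse (b - c) F)"
      unfolding eqF by (rule hasse_mult)
    also have "H dvd \<dots>"
    proof (rule dvd_sum)
      fix c assume c: "c \<in> {..b}"
      show "H dvd hasse c H * hasse (b - c) F"
      proof (cases "c = 1")
        case True
        then have "b - c < n" using that c by auto
        then show ?thesis using IH1 by (simp add: dvd_mult)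
      next
        case False
        then show ?thesis using trm c that by auto
      qed
    qed
    finally show ?thesis .
  qed
  have B: "H dvd (hasse (Suc n) (H ^ Suc n * G) - pderiv H ^ Suc n * G)"
  proof -
    define R where "R = (\<Sum>c\<in>{..Suc n} - {1}. hasse c H * hasse (Suc n - c) F)"
    have "hasse (Suc n) (H ^ Suc n * G) = (\<Sum>c\<le>Suc n. hasse c H * hasse (Suc n - c) F)"
      unfolding eqF by (rule hasse_mult)
    also have "\<dots> = hasse 1 H * hasse n F + R"
      unfolding R_def by (subst sum.remove[of _ 1]) auto
    finally have e: "hasse (Suc n) (H ^ Suc n * G) = pderiv H * hasse n F + R"
      by (metis hasse_1)
    have "H dvd R" unfolding R_def by (rule dvd_sum) (use trm in auto)
    moreover have "H dvd pderiv H * (hasse n F - pderiv H ^ n * G)"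
      using IH2 by (simp add: dvd_mult)
    ultimately have "H dvd pderiv H * (hasse n F - pderiv H ^ n * G) + R" by simp
    also have "pderiv H * (hasse n F - pderiv H ^ n * G) + R
       = hasse (Suc n) (H ^ Suc n * G) - pderiv H ^ Suc n * G"
      unfolding e by (simp add: algebra_simps)
    finally show ?thesis .
  qed
  show ?case using A B by blast
qed

theorem lemma3p3:
  fixes C H :: "'a::{field,finite} poly"
    and Cs :: "nat \<Rightarrow> 'a poly"
    and k t \<mu> :: nat
  assumes "k < CARD('a)"
    and "t \<ge> 1"
    and "C \<noteq> 0"
    and "C = (\<Sum>i<t. Cs i * Lambda_poly ^ i)"
    and "\<forall>i<t. degree (Cs i) \<le> k"
    and "irreducible H"
    and "H ^ \<mu> dvd C"
    and "\<not> H ^ (Suc \<mu>) dvd C"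
  shows "\<mu> mod CARD('a) \<le> k + t - 1"
proof (rule ccontr)
  assume neg: "\<not> \<mu> mod CARD('a) \<le> k + t - 1"
  define q where "q = CARD('a)"
  define r where "r = \<mu> mod q"
  define m where "m = \<mu> div q"
  have q: "q > 0" unfolding q_def using card_ge2[where 'a='a] by simp
  have r: "k + t - 1 < r" "r < q" using neg q by (auto simp: r_def q_def)
  have WC: "W (k + t - 1) C"
    unfolding assms(4)
  proof (rule W_sum)
    fix i assume i: "i \<in> {..<t}"
    have "W (k + i * 1) (Cs i * Lambda_poly ^ i)"
      using assms(5) i by (intro W_mult W_pow W_Lambda W_deg) auto
    thus "W (k + t - 1) (Cs i * Lambda_poly ^ i)" using i by (auto intro: W_mono)
  qed
  hence h0: "hasse r C = 0" using r unfolding W_def q_def by blast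
  obtain G where CG: "C = H ^ \<mu> * G" using assms(7) by (auto elim: dvdE)
  have nG: "\<not> H dvd G"
  proof
    assume "H dvd G"
    then obtain G' where "G = H * G'" by (auto elim: dvdE)
    hence "C = H ^ Suc \<mu> * G'" using CG by (simp add: mult_ac)
    thus False using assms(8) by simp
  qed
  have H0: "H \<noteq> 0" using assms(6) by auto
  have "\<mu> = q * m + r" by (simp add: r_def m_def)
  hence C2: "C = (H ^ q) ^ m * (H ^ r * G)"
    using CG by (simp add: power_add power_mult mult.assoc)
  have W0: "W 0 ((H ^ q) ^ m)" unfolding q_def by (intro W_pow0 W_powq)
  have "hasse r C = (\<Sum>b\<le>r. hasse b ((H ^ q) ^ m) * hasse (r - b) (H ^ r * G))"
    unfolding C2 by (rule hasse_mult)
  also have "\<dots> = hasse 0 ((H ^ q) ^ m) * hasse (r - 0) (H ^ r * G)"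
  proof (subst sum.remove[of _ 0], simp, simp)
    have "(\<Sum>b\<in>{..r} - {0}. hasse b ((H ^ q) ^ m) * hasse (r - b) (H ^ r * G)) = 0"
      using W0 r unfolding W_def q_def by (intro sum.neutral) auto
    thus "hasse 0 ((H ^ q) ^ m) * hasse (r - 0) (H ^ r * G) +
      (\<Sum>b\<in>{..r} - {0}. hasse b ((H ^ q) ^ m) * hasse (r - b) (H ^ r * G)) =
      hasse 0 ((H ^ q) ^ m) * hasse (r - 0) (H ^ r * G)" by simp
  qed
  finally have "(H ^ q) ^ m * hasse r (H ^ r * G) = 0" using h0 by (simp add: hasse_0)
  hence hr: "hasse r (H ^ r * G) = 0" using H0 by simp
  have "H dvd pderiv H ^ r * G"
    using hasse_pow_mod[of r H G] hr by (simp add: dvd_minus_iff)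
  moreover have pe: "prime_elem H" using assms(6) by (rule field_poly_irreducible_imp_prime)
  ultimately have "H dvd pderiv H" using nG
    by (auto simp: prime_elem_dvd_mult_iff dest: prime_elem_dvd_power)
  moreover have "pderiv H \<noteq> 0" using sep[OF assms(6)] .
  ultimately have "degree H \<le> degree (pderiv H)" by (rule dvd_imp_degree_le)
  moreover have "degree H > 0"
    using assms(6) H0 by (metis irreducible_not_unit is_unit_iff_degree neq0_conv)
  moreover have "degree (pderiv H) \<le> degree H - 1"
    by (rule degree_le) (auto simp: coeff_pderiv coeff_eq_0)
  ultimately show False by linarith
qed

end
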